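(* Let $A = \begin{bmatrix} E & B \\ B^\top & D \end{bmatrix}$ be a symmetric $2N \times 2N$ real matrix, where $E, D$ are symmetric $N\times N$ matrices and $B$ is an $N \times N$ matrix, and fix $\epsilon_0 > 0$. If for all $\epsilon \in (0,\epsilon_0)$ there exist symmetric $N\times N$ matrices $X_\epsilon, -Y_\epsilon$ satisfying $$\begin{bmatrix} X_\epsilon & 0 \\ 0 & -Y_\epsilon \end{bmatrix} \leq A + \epsilon A^2,$$ then $X_\epsilon \leq E + \epsilon_0(E^2 + B B^\top)$ and $-Y_\epsilon \leq D + \epsilon_0(D^2 + B^\top B)$ for all $\epsilon \in (0,\epsilon_0)$.
   Context: Matrices are real; $\mathbb{S}(N)$ denotes the space of symmetric $N\times N$ real matrices, ordered by Löwner's partial order: $P \leq Q$ iff $\langle Px,x\rangle \leq \langle Qx,x\rangle$ for all $x$. In the application, $A = D^2 z(\hat x,\hat y)$ is the Hessian of a $C^2$ test function $z(x,y)$ at a local maximum point of $u(x)-v(y)-z(x,y)$, and $X_\epsilon, Y_\epsilon$ are the matrices produced by the theorem of sums, which satisfy $\begin{bmatrix} X_\epsilon & 0 \\ 0 & -Y_\epsilon \end{bmatrix} \leq A + \epsilon A^2$. *)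

theory Defs
  imports "HOL-Analysis.Analysis"
begin

definition sym_mat :: "('a::comm_ring_1)^'n^'n \<Rightarrow> bool" where
  "sym_mat M \<longleftrightarrow> transpose M = M"

definition loewner_le :: "real^'n^'n \<Rightarrow> real^'n^'n \<Rightarrow> bool" where
  "loewner_le P Q \<longleftrightarrow> (\<forall>x. x \<bullet> (P *v x) \<le> x \<bullet> (Q *v x))"

definition block_mat :: "'a^'n^'n \<Rightarrow> 'a^'n^'n \<Rightarrow> 'a^'n^'n \<Rightarrow> 'a^'n^'n \<Rightarrow> 'a^('n+'n)^('n+'n)" where
  "block_mat P Q R S = (\<chi> i j. case i of
      Inl i' \<Rightarrow> (case j of Inl j' \<Rightarrow> P $ i' $ j' | Inr j' \<Rightarrow> Q $ i' $ j')
    | Inr i' \<Rightarrow> (case j of Inl j' \<Rightarrow> R $ i' $ j' | Inr j' \<Rightarrow> S $ i' $ j'))"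

end

theory Submission
  imports Defs
begin

lemma sum_plus_univ:
  fixes f :: "'a::finite + 'b::finite \<Rightarrow> 'c::comm_monoid_add"
  shows "sum f UNIV = (\<Sum>i\<in>UNIV. f (Inl i)) + (\<Sum>i\<in>UNIV. f (Inr i))"
  using sum.Plus[of "UNIV::'a set" "UNIV::'b set" f] by (simp add: comp_def)

definition inlv :: "real^'n \<Rightarrow> real^('n+'n)" where
  "inlv x = (\<chi> i. case i of Inl j \<Rightarrow> x $ j | Inr _ \<Rightarrow> 0)"
definition inrv :: "real^'n \<Rightarrow> real^('n+'n)" where
  "inrv x = (\<chi> i. case i of Inl _ \<Rightarrow> 0 | Inr j \<Rightarrow> x $ j)"

lemma quad_inl: "inlv x \<bullet> (block_mat P Q R S *v inlv x) = x \<bullet> (P *v x)"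
  by (simp add: inlv_def block_mat_def inner_vec_def matrix_vector_mult_def sum_plus_univ)

lemma quad_inr: "inrv x \<bullet> (block_mat P Q R S *v inrv x) = x \<bullet> (S *v x)"
  by (simp add: inrv_def block_mat_def inner_vec_def matrix_vector_mult_def sum_plus_univ)

lemma block_mult:
  "block_mat P Q R S ** block_mat P' Q' R' S' =
   block_mat (P**P' + Q**R') (P**Q' + Q**S') (R**P' + S**R') (R**Q' + S**S')"
  unfolding vec_eq_iff block_mat_def
  by (auto simp: matrix_matrix_mult_def sum_plus_univ split: sum.split)

lemma quad_add: "(v::real^'m) \<bullet> ((M + c *\<^sub>R N) *v v) = v \<bullet> (M *v v) + c * (v \<bullet> (N *v v))"
  by (simp add: matrix_vector_mult_add_rdistrib scaleR_matrix_vector_assoc[symmetric] inner_add_right)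

lemma quad_sq: "sym_mat (E::real^'n^'n) \<Longrightarrow> 0 \<le> x \<bullet> ((E ** E) *v x)"
proof -
  assume "sym_mat E"
  hence "x \<bullet> ((E ** E) *v x) = (E *v x) \<bullet> (E *v x)"
    by (metis dot_lmul_matrix matrix_vector_mul_assoc sym_mat_def transpose_matrix_vector)
  thus ?thesis by simp
qed

lemma quad_BBt: "0 \<le> (x::real^'n) \<bullet> ((B ** transpose B) *v x)"
proof -
  have "x \<bullet> ((B ** transpose B) *v x) = (transpose B *v x) \<bullet> (transpose B *v x)"
    by (metis dot_lmul_matrix matrix_vector_mul_assoc transpose_matrix_vector)
  thus ?thesis by simp
qed

lemma quad_BtB: "0 \<le> (x::real^'n) \<bullet> ((transpose B ** B) *v x)"
  using quad_BBt[of x "transpose B"] by (simp add: transpose_transpose)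

theorem lemma2:
  fixes E B D :: "real^'n^'n"
    and X Y :: "real \<Rightarrow> real^'n^'n"
    and \<epsilon>0 :: real
  assumes "sym_mat E" and "sym_mat D"
    and "\<epsilon>0 > 0"
    and "\<forall>\<epsilon>. 0 < \<epsilon> \<and> \<epsilon> < \<epsilon>0 \<longrightarrow>
           sym_mat (X \<epsilon>) \<and> sym_mat (- Y \<epsilon>) \<and>
           loewner_le (block_mat (X \<epsilon>) 0 0 (- Y \<epsilon>))
             (block_mat E B (transpose B) D
              + \<epsilon> *\<^sub>R (block_mat E B (transpose B) D ** block_mat E B (transpose B) D))"
  shows "\<forall>\<epsilon>. 0 < \<epsilon> \<and> \<epsilon> < \<epsilon>0 \<longrightarrow>
           loewner_le (X \<epsilon>) (E + \<epsilon>0 *\<^sub>R (E ** E + B ** transpose B)) \<and>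
           loewner_le (- Y \<epsilon>) (D + \<epsilon>0 *\<^sub>R (D ** D + transpose B ** B))"
proof (intro allI impI conjI)
  fix \<epsilon> :: real
  assume e: "0 < \<epsilon> \<and> \<epsilon> < \<epsilon>0"
  let ?A = "block_mat E B (transpose B) D"
  have L: "loewner_le (block_mat (X \<epsilon>) 0 0 (- Y \<epsilon>)) (?A + \<epsilon> *\<^sub>R (?A ** ?A))"
    using assms(4) e by blast
  have AA: "?A ** ?A = block_mat (E**E + B**transpose B) (E**B + B**D)
       (transpose B**E + D**transpose B) (transpose B**B + D**D)"
    by (simp add: block_mult)
  show "loewner_le (X \<epsilon>) (E + \<epsilon>0 *\<^sub>R (E ** E + B ** transpose B))"
    unfolding loewner_le_def
  proof
    fix x :: "real^'n"
    have q: "0 \<le> x \<bullet> ((E ** E + B ** transpose B) *v x)"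
      using quad_sq[OF assms(1), of x] quad_BBt[of x B]
      by (simp add: matrix_vector_mult_add_rdistrib inner_add_right)
    have "x \<bullet> (X \<epsilon> *v x) \<le> x \<bullet> (E *v x) + \<epsilon> * (x \<bullet> ((E ** E + B ** transpose B) *v x))"
      using L[unfolded loewner_le_def, rule_format, of "inlv x"]
      by (simp only: quad_add AA quad_inl)
    also have "\<dots> \<le> x \<bullet> (E *v x) + \<epsilon>0 * (x \<bullet> ((E ** E + B ** transpose B) *v x))"
      using e q by (simp add: mult_right_mono)
    finally show "x \<bullet> (X \<epsilon> *v x) \<le> x \<bullet> ((E + \<epsilon>0 *\<^sub>R (E ** E + B ** transpose B)) *v x)"
      by (simp only: quad_add)
  qed
  show "loewner_le (- Y \<epsilon>) (D + \<epsilon>0 *\<^sub>R (D ** D + transpose B ** B))"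
    unfolding loewner_le_def
  proof
    fix x :: "real^'n"
    have q: "0 \<le> x \<bullet> ((D ** D + transpose B ** B) *v x)"
      using quad_sq[OF assms(2), of x] quad_BtB[of x B]
      by (simp add: matrix_vector_mult_add_rdistrib inner_add_right)
    have "x \<bullet> (- Y \<epsilon> *v x) \<le> x \<bullet> (D *v x) + \<epsilon> * (x \<bullet> ((transpose B ** B + D ** D) *v x))"
      using L[unfolded loewner_le_def, rule_format, of "inrv x"]
      by (simp only: quad_add AA quad_inr)
    also have "\<dots> = x \<bullet> (D *v x) + \<epsilon> * (x \<bullet> ((D ** D + transpose B ** B) *v x))"
      by (simp add: add.commute)
    also have "\<dots> \<le> x \<bullet> (D *v x) + \<epsilon>0 * (x \<bullet> ((D ** D + transpose B ** B) *v x))"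
      using e q by (simp add: mult_right_mono)
    finally show "x \<bullet> (- Y \<epsilon> *v x) \<le> x \<bullet> ((D + \<epsilon>0 *\<^sub>R (D ** D + transpose B ** B)) *v x)"
      by (simp only: quad_add)
  qed
qed

end
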